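(* Let $T:\mathbb{Z}_{\ge 0}\to\mathbb{R}$ be a sequence of real numbers. Then $T$ satisfies $$T(mn) = T(m)T(n) + T(m-1)T(n-1) \quad\text{for all integers } m,n\ge 1$$ if and only if $T$ is one of the following five sequences: (1) $T(n)=0$ for all $n\ge 0$; (2) $T(n)=\tfrac12$ for all $n\ge 0$; (3) $T(0)=0$ and $T(2n)=T(2n-1)=n$ for all $n\ge 1$; (4) $T(3n)=T(3n+2)=0$ and $T(3n+1)=1$ for all $n\ge 0$; (5) $T(n)=\tfrac12 n(n+1)$ for all $n\ge 0$. *)

theory Defs
  imports Main Complex_Main
begin

end

theory Submission
  imports Defs
begin

definition FE :: "(nat \<Rightarrow> real) \<Rightarrow> bool" where
 "FE T \<longleftrightarrow> (\<forall>m n. m \<ge> 1 \<longrightarrow> n \<ge> 1 \<longrightarrow> T (m * n) = T m * T n + T (m - 1) * T (n - 1))"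

lemma FE_inst: "FE T \<Longrightarrow> 1 \<le> m \<Longrightarrow> 1 \<le> n \<Longrightarrow> T (m * n) = T m * T n + T (m - 1) * T (n - 1)"
  unfolding FE_def by blast

lemma polys:
  assumes F: "FE T" and T0: "T 0 = 0" and T1: "T 1 = 1"
  shows "T 3*(T 2^2+2*T 2-1) = 3*T 2^3+T 2"
    and "T 3^2 - T 3*(T 2^2+T 2+2) + T 2^3+2*T 2^2+T 2 = 0"
    and "(T 2-T 3)^3 + T 3^2 - 2*T 3 + T 2 = 0"
proof -
  have i: "\<And>m n. 1 \<le> m \<Longrightarrow> 1 \<le> n \<Longrightarrow> T (m * n) = T m * T n + T (m - 1) * T (n - 1)"
    using FE_inst[OF F] by blast
  have a4: "T 4 = T 2 * T 2 + T 1 * T 1" using i[of 2 2] by simp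
  have a6: "T 6 = T 2 * T 3 + T 1 * T 2" using i[of 2 3] by simp
  have a8: "T 8 = T 2 * T 4 + T 1 * T 3" using i[of 2 4] by simp
  have a9: "T 9 = T 3 * T 3 + T 2 * T 2" using i[of 3 3] by simp
  have a10: "T 10 = T 2 * T 5 + T 1 * T 4" using i[of 2 5] by simp
  have a12: "T 12 = T 2 * T 6 + T 1 * T 5" using i[of 2 6] by simp
  have b12: "T 12 = T 3 * T 4 + T 2 * T 3" using i[of 3 4] by simp
  have a15: "T 15 = T 3 * T 5 + T 2 * T 4" using i[of 3 5] by simp
  have a16: "T 16 = T 2 * T 8 + T 1 * T 7" using i[of 2 8] by simp
  have b16: "T 16 = T 4 * T 4 + T 3 * T 3" using i[of 4 4] by simp
  have a18: "T 18 = T 2 * T 9 + T 1 * T 8" using i[of 2 9] by simp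
  have b18: "T 18 = T 3 * T 6 + T 2 * T 5" using i[of 3 6] by simp
  have a20: "T 20 = T 2 * T 10 + T 1 * T 9" using i[of 2 10] by simp
  have b20: "T 20 = T 4 * T 5 + T 3 * T 4" using i[of 4 5] by simp
  have a32: "T 32 = T 2 * T 16 + T 1 * T 15" using i[of 2 16] by simp
  have b32: "T 32 = T 4 * T 8 + T 3 * T 7" using i[of 4 8] by simp
  define x where "x = T 2"
  define y where "y = T 3"
  have h4: "T 4 = x^2+1" using a4 T1 unfolding x_def by (simp add: power2_eq_square)
  have h6: "T 6 = x*y+x" using a6 T1 unfolding x_def y_def by simp
  have h8: "T 8 = x^3+x+y" using a8 h4 T1 unfolding x_def y_def by (simp add: algebra_simps power3_eq_cube power2_eq_square)
  have h9: "T 9 = y^2+x^2" using a9 unfolding x_def y_def by (simp add: power2_eq_square)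
  have h5: "T 5 = y + x*y - x^2" using a12 b12 h4 h6 T1 unfolding x_def[symmetric] y_def[symmetric]
    by (simp add: algebra_simps power2_eq_square)
  have h10: "T 10 = x*T 5 + T 4" using a10 T1 unfolding x_def by simp
  have h7: "T 7 = T 4 * T 4 + y*y - x * T 8" using a16 b16 T1 unfolding x_def y_def by simp
  have h15: "T 15 = y*T 5 + x*T 4" using a15 unfolding x_def y_def by simp
  have L0: "x * T 9 + T 8 = y * T 6 + x * T 5" using a18 b18 T1 unfolding x_def y_def by simp
  have Q0: "x * T 10 + T 9 = T 4 * T 5 + y * T 4" using a20 b20 T1 unfolding x_def y_def by simp
  have P0: "x * T 16 + T 15 = T 4 * T 8 + y * T 7" using a32 b32 T1 unfolding x_def y_def by simp
  show "T 3*(T 2^2+2*T 2-1) = 3*T 2^3+T 2" using L0 unfolding x_def[symmetric] y_def[symmetric] h9 h8 h6 h5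
    by algebra
  show "T 3^2 - T 3*(T 2^2+T 2+2) + T 2^3+2*T 2^2+T 2 = 0" using Q0 unfolding x_def[symmetric] y_def[symmetric] h10 h9 h4 h5
    by algebra
  show "(T 2-T 3)^3 + T 3^2 - 2*T 3 + T 2 = 0" using P0 b16 unfolding x_def[symmetric] y_def[symmetric] h15 h4 h5 h7 h8
    by algebra
qed

lemma rec:
  assumes F: "FE T" and T0: "T 0 = 0" and T1: "T 1 = 1" and N: "N \<ge> 1"
  shows "T (2*N) = T 2 * T N + T (N-1)" "T (2*N-1) = T N + (T 3 - T 2) * T (N-1)"
proof -
  have i: "\<And>m n. 1 \<le> m \<Longrightarrow> 1 \<le> n \<Longrightarrow> T (m * n) = T m * T n + T (m - 1) * T (n - 1)"
    using FE_inst[OF F] by blast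
  have e1: "T (2*N) = T 2 * T N + T 1 * T (N-1)" using i[of 2 N] N by simp
  have e2: "T (4*N) = T 4 * T N + T 3 * T (N-1)" using i[of 4 N] N by simp
  have e3: "T (4*N) = T 2 * T (2*N) + T 1 * T (2*N-1)" using i[of 2 "2*N"] N by (simp add: mult.assoc)
  have e4: "T 4 = T 2 * T 2 + T 1 * T 1" using i[of 2 2] by simp
  show "T (2*N) = T 2 * T N + T (N-1)" using e1 T1 by simp
  show "T (2*N-1) = T N + (T 3 - T 2) * T (N-1)" using e1 e2 e3 e4 T1 by algebra
qed

lemma uniq:
  assumes F: "FE T" and G: "FE f" and "T 0 = 0" "T 1 = 1" "f 0 = 0" "f 1 = 1" "T 2 = f 2" "T 3 = f 3"
  shows "T n = f n"
proof (induction n rule: less_induct)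
  case (less n)
  show ?case
  proof (cases "n \<le> 3")
    case True
    then have "n = 0 \<or> n = 1 \<or> n = 2 \<or> n = 3" by auto
    then show ?thesis using assms by auto
  next
    case False
    show ?thesis
    proof (cases "even n")
      case True
      then obtain N where n: "n = 2*N" by blast
      with False have N: "N \<ge> 1" "N < n" "N - 1 < n" by auto
      show ?thesis using rec(1)[OF F assms(3,4) N(1)] rec(1)[OF G assms(5,6) N(1)]
        less.IH[OF N(2)] less.IH[OF N(3)] n assms(7) by simp
    next
      case True': False
      then obtain k where k: "n = 2*k+1" by (blast elim: oddE)
      define N where "N = k + 1"
      have n: "n = 2*N - 1" "N \<ge> 1" using k N_def by auto
      with False have N: "N < n" "N - 1 < n" by auto
      show ?thesis using rec(2)[OF F assms(3,4) n(2)] rec(2)[OF G assms(5,6) n(2)]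
        less.IH[OF N(1)] less.IH[OF N(2)] n assms(7,8) by simp
    qed
  qed
qed
definition f3 :: "nat \<Rightarrow> real" where "f3 n = real ((n+1) div 2)"
definition f4 :: "nat \<Rightarrow> real" where "f4 n = (if n mod 3 = 1 then 1 else 0)"
definition f5 :: "nat \<Rightarrow> real" where "f5 n = real n * (real n + 1) / 2"

lemma f3_nat: "(m*n+1) div 2 = ((m+1) div 2)*((n+1) div 2) + (m div 2)*(n div 2)" for m n :: nat
proof (cases "even m")
  case True
  then obtain p where m: "m = 2*p" by blast
  show ?thesis
  proof (cases "even n")
    case True
    then obtain q where n: "n = 2*q" by blast
    have "m*n+1 = 2*(2*p*q) + 1" "m+1 = 2*p+1" "n+1 = 2*q+1" using m n by simp_all
    then show ?thesis using m n by simp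
  next
    case False
    then obtain q where n: "n = 2*q+1" by (blast elim: oddE)
    have "m*n+1 = 2*(p*n) + 1" "m+1 = 2*p+1" "n+1 = 2*(q+1)" using m n by simp_all
    then show ?thesis using m n by (simp add: algebra_simps)
  qed
next
  case False
  then obtain p where m: "m = 2*p+1" by (blast elim: oddE)
  show ?thesis
  proof (cases "even n")
    case True
    then obtain q where n: "n = 2*q" by blast
    have "m*n+1 = 2*(m*q) + 1" "m+1 = 2*(p+1)" "n+1 = 2*q+1" using m n by simp_all
    then show ?thesis using m n by (simp add: algebra_simps)
  next
    case False
    then obtain q where n: "n = 2*q+1" by (blast elim: oddE)
    have "m*n+1 = 2*(2*p*q+p+q+1)" "m+1 = 2*(p+1)" "n+1 = 2*(q+1)" using m n by (simp_all add: algebra_simps)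
    then show ?thesis using m n by (simp add: algebra_simps)
  qed
qed

lemma FE_f3: "FE f3"
  unfolding FE_def f3_def
proof (intro allI impI)
  fix m n :: nat assume "1 \<le> m" "1 \<le> n"
  then have e: "m - 1 + 1 = m" "n - 1 + 1 = n" by auto
  show "real ((m * n + 1) div 2) = real ((m + 1) div 2) * real ((n + 1) div 2) + real ((m - 1 + 1) div 2) * real ((n - 1 + 1) div 2)"
    unfolding e f3_nat[of m n] of_nat_add of_nat_mult by (rule refl)
qed

lemma FE_f4: "FE f4"
  unfolding FE_def
proof (intro allI impI)
  fix m n :: nat assume "1 \<le> m" "1 \<le> n"
  then obtain j l where m: "m = Suc j" and n: "n = Suc l" by (metis Suc_pred' less_eq_Suc_le One_nat_def)
  have mn: "(m*n) mod 3 = ((m mod 3)*(n mod 3)) mod 3" by (simp add: mod_mult_eq)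
  have "j mod 3 = 0 \<or> j mod 3 = 1 \<or> j mod 3 = 2" "l mod 3 = 0 \<or> l mod 3 = 1 \<or> l mod 3 = 2" by auto
  then show "f4 (m * n) = f4 m * f4 n + f4 (m - 1) * f4 (n - 1)" unfolding f4_def using mn unfolding m n
    by (elim disjE) (simp_all add: mod_Suc)
qed

lemma FE_f5: "FE f5"
  unfolding FE_def f5_def
proof (intro allI impI)
  fix m n :: nat assume a: "1 \<le> m" "1 \<le> n"
  then have "real (m - 1) = real m - 1" "real (n - 1) = real n - 1" by auto
  then show "real (m * n) * (real (m * n) + 1) / 2 =
       real m * (real m + 1) / 2 * (real n * (real n + 1) / 2) + real (m - 1) * (real (m - 1) + 1) / 2 * (real (n - 1) * (real (n - 1) + 1) / 2)"
    by (simp add: field_simps)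
qed

lemma alg:
  fixes x y :: real
  assumes L: "y*(x^2+2*x-1) = 3*x^3+x"
    and Q: "y^2 - y*(x^2+x+2) + x^3+2*x^2+x = 0"
    and P: "(x-y)^3 + y^2 - 2*y + x = 0"
  shows "(x = 0 \<and> y = 0) \<or> (x = 1 \<and> y = 2) \<or> (x = 3 \<and> y = 6)"
proof -
  have R: "x*(x-1)*(x-3)*(x+1)*(2*x^3+x-1) = 0" using L Q by algebra
  show ?thesis
  proof (cases "2*x^3+x-1 = 0")
    case True
    have False using True L P by algebra
    then show ?thesis ..
  next
    case False
    with R have "x = 0 \<or> x = 1 \<or> x = 3 \<or> x = -1" by auto
    then show ?thesis
    proof (elim disjE)
      assume "x = -1" with L P show ?thesis by auto
    qed (use L in auto)
  qed
qed

lemma forward: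
  assumes F: "FE T"
  shows "(\<forall>n. T n = 0)
     \<or> (\<forall>n. T n = 1 / 2)
     \<or> (T 0 = 0 \<and> (\<forall>n. n \<ge> 1 \<longrightarrow> T (2 * n) = real n \<and> T (2 * n - 1) = real n))
     \<or> (\<forall>n. T (3 * n) = 0 \<and> T (3 * n + 2) = 0 \<and> T (3 * n + 1) = 1)
     \<or> (\<forall>n. T n = real n * (real n + 1) / 2)"
proof -
  have i: "\<And>m n. 1 \<le> m \<Longrightarrow> 1 \<le> n \<Longrightarrow> T (m * n) = T m * T n + T (m - 1) * T (n - 1)"
    using FE_inst[OF F] by blast
  have m1: "\<And>n. 1 \<le> n \<Longrightarrow> T n = T 1 * T n + T 0 * T (n - 1)" using i[of 1] by simp
  have e11: "T 1 = T 1 * T 1 + T 0 * T 0" using i[of 1 1] by simp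
  show ?thesis
  proof (cases "T 1 = 1")
    case True
    then have "T 0 * T 0 = 0" using e11 by simp
    then have T0: "T 0 = 0" by simp
    note p = polys[OF F T0 True]
    have "(T 2 = 0 \<and> T 3 = 0) \<or> (T 2 = 1 \<and> T 3 = 2) \<or> (T 2 = 3 \<and> T 3 = 6)"
      using alg[OF p] .
    then show ?thesis
    proof (elim disjE conjE)
      assume a: "T 2 = 0" "T 3 = 0"
      have "\<And>n. T n = f4 n" by (rule uniq[OF F FE_f4]) (use a T0 True in \<open>simp_all add: f4_def\<close>)
      then have "\<forall>n. T (3 * n) = 0 \<and> T (3 * n + 2) = 0 \<and> T (3 * n + 1) = 1" by (simp add: f4_def mod_Suc)
      then show ?thesis by blast
    next
      assume a: "T 2 = 1" "T 3 = 2"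
      have "\<And>n. T n = f3 n" by (rule uniq[OF F FE_f3]) (use a T0 True in \<open>simp_all add: f3_def\<close>)
      then have "T 0 = 0 \<and> (\<forall>n. n \<ge> 1 \<longrightarrow> T (2 * n) = real n \<and> T (2 * n - 1) = real n)"
        by (auto simp: f3_def)
      then show ?thesis by blast
    next
      assume a: "T 2 = 3" "T 3 = 6"
      have "\<And>n. T n = f5 n" by (rule uniq[OF F FE_f5]) (use a T0 True in \<open>simp_all add: f5_def\<close>)
      then show ?thesis by (simp add: f5_def)
    qed
  next
    case False
    define a where "a = T 0"
    define c where "c = a / (1 - T 1)"
    have step: "\<And>n. T (Suc n) = c * T n"
    proof -
      fix n
      have "T (Suc n) = T 1 * T (Suc n) + a * T n" using m1[of "Suc n"] unfolding a_def by simp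
      then have "(1 - T 1) * T (Suc n) = a * T n" by (simp add: algebra_simps)
      then show "T (Suc n) = c * T n" using False unfolding c_def by (simp add: field_simps)
    qed
    have Tn: "\<And>n. T n = a * c ^ n"
    proof -
      fix n show "T n = a * c ^ n" by (induction n) (simp_all add: a_def step)
    qed
    show ?thesis
    proof (cases "a = 0")
      case True
      then show ?thesis using Tn by simp
    next
      case an: False
      have e1: "a * c = (a*c) * (a*c) + a * a" using e11 Tn[of 0] Tn[of 1] by simp
      have e4: "T 4 = T 2 * T 2 + T 1 * T 1" using i[of 2 2] by simp
      then have e2: "a * c^4 = (a*c^2)*(a*c^2) + (a*c)*(a*c)" using Tn[of 4] Tn[of 2] Tn[of 1] by simp
      have h1: "c = a * c^2 + a" using e1 an by algebra
      have h2: "c^4 = a*c^4 + a*c^2" using e2 an by algebra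
      have "c^4 = c^3" using h1 h2 by algebra
      then have "c^3 * (c - 1) = 0" by algebra
      moreover have "c \<noteq> 0" using h1 an by auto
      ultimately have c1: "c = 1" by simp
      then have "a = 1/2" using h1 by simp
      then show ?thesis using Tn c1 by simp
    qed
  qed
qed

lemma backward:
  assumes "(\<forall>n. T n = 0)
     \<or> (\<forall>n. T n = 1 / 2)
     \<or> (T 0 = 0 \<and> (\<forall>n. n \<ge> 1 \<longrightarrow> T (2 * n) = real n \<and> T (2 * n - 1) = real n))
     \<or> (\<forall>n. T (3 * n) = 0 \<and> T (3 * n + 2) = 0 \<and> T (3 * n + 1) = 1)
     \<or> (\<forall>n. T n = real n * (real n + 1) / 2)"
  shows "FE T"
  using assms
proof (elim disjE)
  assume "\<forall>n. T n = 0" then show ?thesis by (simp add: FE_def)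
next
  assume "\<forall>n. T n = 1 / 2" then have "T = (\<lambda>_. 1/2)" by auto
  then show ?thesis by (simp add: FE_def)
next
  assume a: "T 0 = 0 \<and> (\<forall>n. n \<ge> 1 \<longrightarrow> T (2 * n) = real n \<and> T (2 * n - 1) = real n)"
  have "T = f3"
  proof
    fix n show "T n = f3 n"
    proof (cases "even n")
      case True
      then obtain k where n: "n = 2*k" by blast
      show ?thesis
      proof (cases "k = 0")
        case True then show ?thesis using a n by (simp add: f3_def)
      next
        case False
        then have "T (2*k) = real k" using a by simp
        moreover have "(2*k+1) div 2 = k" by simp
        ultimately show ?thesis using n by (simp add: f3_def)
      qed
    next
      case False
      then obtain k where n: "n = 2*k+1" by (blast elim: oddE)
      have "T (2*(k+1) - 1) = real (k+1)" using a le_add2[of 1 k] by blast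
      moreover have "(2*k+1+1) div 2 = k+1" by simp
      moreover have "2*(k+1) - 1 = 2*k+1" by simp
      ultimately show ?thesis using n by (simp add: f3_def)
    qed
  qed
  then show ?thesis using FE_f3 by simp
next
  assume a: "\<forall>n. T (3 * n) = 0 \<and> T (3 * n + 2) = 0 \<and> T (3 * n + 1) = 1"
  have "T = f4"
  proof
    fix n :: nat
    have d: "n = 3 * (n div 3) + n mod 3" by simp
    have "n mod 3 = 0 \<or> n mod 3 = 1 \<or> n mod 3 = 2" by auto
    then show "T n = f4 n"
    proof (elim disjE)
      assume r: "n mod 3 = 0"
      then have "n = 3 * (n div 3)" using d by simp
      then show ?thesis using a r by (metis f4_def zero_neq_one)
    next
      assume r: "n mod 3 = 1"
      then have "n = 3 * (n div 3) + 1" using d by simp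
      then show ?thesis using a r by (metis f4_def)
    next
      assume r: "n mod 3 = 2"
      then have "n = 3 * (n div 3) + 2" using d by simp
      then show ?thesis using a r by (metis f4_def numeral_One numeral_eq_iff semiring_norm(88))
    qed
  qed
  then show ?thesis using FE_f4 by simp
next
  assume "\<forall>n. T n = real n * (real n + 1) / 2"
  then have "T = f5" by (auto simp: f5_def)
  then show ?thesis using FE_f5 by simp
qed

theorem theorem1:
  fixes T :: "nat \<Rightarrow> real"
  shows "(\<forall>m n. m \<ge> 1 \<longrightarrow> n \<ge> 1 \<longrightarrow> T (m * n) = T m * T n + T (m - 1) * T (n - 1))
    \<longleftrightarrow>
    ((\<forall>n. T n = 0)
     \<or> (\<forall>n. T n = 1 / 2)
     \<or> (T 0 = 0 \<and> (\<forall>n. n \<ge> 1 \<longrightarrow> T (2 * n) = real n \<and> T (2 * n - 1) = real n))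
     \<or> (\<forall>n. T (3 * n) = 0 \<and> T (3 * n + 2) = 0 \<and> T (3 * n + 1) = 1)
     \<or> (\<forall>n. T n = real n * (real n + 1) / 2))"
  using forward[of T] backward[of T] unfolding FE_def by blast

end
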